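(* For every density matrix $\rho_{AB}$ on a finite-dimensional space $\mathcal H_A\otimes\mathcal H_B$, $\mu_{\mathrm{ent}}(\rho_{AB})=0$ if and only if $\rho_{AB}$ is separable, i.e., $\rho_{AB}=\sum_i p_i\,\tau_A^{(i)}\otimes\tau_B^{(i)}$ for some probability weights $p_i$ and density matrices $\tau_A^{(i)},\tau_B^{(i)}$.
   Context: For a bipartite density matrix $\rho_{AB}$ with reduced states $\rho_A,\rho_B$, the maximal correlation is $\mu(\rho_{AB})=\max |\mathrm{tr}(\rho_{AB}\, X_A\otimes Y_B^\dagger)|$ over $X_A\in\mathbf L(\mathcal H_A)$, $Y_B\in\mathbf L(\mathcal H_B)$ with $\mathrm{tr}(\rho_A X_A)=\mathrm{tr}(\rho_B Y_B)=0$ and $\mathrm{tr}(\rho_A X_AX_A^\dagger)=\mathrm{tr}(\rho_B Y_BY_B^\dagger)=1$. The maximal entanglement is $\mu_{\mathrm{ent}}(\rho_{AB})=\inf \max_i \mu(\tau^{(i)}_{AB})$, the infimum over all decompositions $\rho_{AB}=\sum_i p_i\tau^{(i)}_{AB}$ with $p_i\ge0$ and $\tau^{(i)}_{AB}$ density matrices. *)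

theory Defs
  imports "HOL-Analysis.Analysis"
begin

text \<open>Operators on a finite-dimensional Hilbert space with orthonormal basis indexed by a
finite type are represented as complex square matrices of type complex^'n::finite^'n.
The bipartite space H_A tensor H_B has basis indexed by 'a \<times> 'b.\<close>

definition mtrace :: "complex^'n::finite^'n \<Rightarrow> complex" where
  "mtrace A = (\<Sum>i\<in>UNIV. A $ i $ i)"

definition madj :: "complex^'n::finite^'n \<Rightarrow> complex^'n::finite^'n" where
  "madj A = (\<chi> i j. cnj (A $ j $ i))"

definition psd :: "complex^'n::finite^'n \<Rightarrow> bool" where
  "psd A \<longleftrightarrow> (\<forall>v::complex^'n.
     (let q = (\<Sum>i\<in>UNIV. \<Sum>j\<in>UNIV. cnj (v $ i) * A $ i $ j * v $ j)
      in Im q = 0 \<and> Re q \<ge> 0))"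

definition density :: "complex^'n::finite^'n \<Rightarrow> bool" where
  "density A \<longleftrightarrow> psd A \<and> mtrace A = 1"

definition tensor :: "complex^'a^'a \<Rightarrow> complex^'b^'b \<Rightarrow> complex^('a::finite\<times>'b::finite)^('a\<times>'b)" where
  "tensor A B = (\<chi> r s. A $ fst r $ fst s * B $ snd r $ snd s)"

definition ptraceB :: "complex^('a::finite\<times>'b::finite)^('a\<times>'b) \<Rightarrow> complex^'a^'a" where
  "ptraceB R = (\<chi> i k. \<Sum>j\<in>UNIV. R $ (i,j) $ (k,j))"

definition ptraceA :: "complex^('a::finite\<times>'b::finite)^('a\<times>'b) \<Rightarrow> complex^'b^'b" where
  "ptraceA R = (\<chi> j l. \<Sum>i\<in>UNIV. R $ (i,j) $ (i,l))"

text \<open>The maximum is taken as a supremum; 0 is inserted so that the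
value is 0 (convention max of the empty set = 0) when no feasible X, Y exist (e.g. a
one-dimensional factor). All values in the set are nonnegative, so otherwise nothing changes.\<close>
definition maxcorr :: "complex^('a::finite\<times>'b::finite)^('a\<times>'b) \<Rightarrow> real" where
  "maxcorr R = Sup (insert 0 {cmod (mtrace (R ** tensor X (madj Y))) | X Y.
      mtrace (ptraceB R ** X) = 0 \<and> mtrace (ptraceA R ** Y) = 0 \<and>
      mtrace (ptraceB R ** (X ** madj X)) = 1 \<and> mtrace (ptraceA R ** (Y ** madj Y)) = 1})"

definition maxent :: "complex^('a::finite\<times>'b::finite)^('a\<times>'b) \<Rightarrow> real" where
  "maxent R = Inf {Max ((\<lambda>i. maxcorr (\<tau> i)) ` {..<n}) | (n::nat) p \<tau>.
      (\<forall>i<n. p i \<ge> (0::real) \<and> density (\<tau> i)) \<and>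
      R = (\<Sum>i<n. p i *\<^sub>R \<tau> i)}"

definition separable :: "complex^('a::finite\<times>'b::finite)^('a\<times>'b) \<Rightarrow> bool" where
  "separable R \<longleftrightarrow> (\<exists>(n::nat) (p::nat \<Rightarrow> real) (tA::nat \<Rightarrow> complex^'a^'a) (tB::nat \<Rightarrow> complex^'b^'b).
      (\<forall>i<n. p i \<ge> 0 \<and> density (tA i) \<and> density (tB i)) \<and> (\<Sum>i<n. p i) = 1 \<and>
      R = (\<Sum>i<n. p i *\<^sub>R tensor (tA i) (tB i)))"

end

theory Submission
  imports Defs
begin

definition unitm :: "'n \<Rightarrow> 'n \<Rightarrow> complex^'n::finite^'n" where
  "unitm p q = (\<chi> i j. if i = p \<and> j = q then 1 else 0)"

lemma sum_pair: "(\<Sum>x\<in>(UNIV::('a::finite\<times>'b::finite) set). f x) = (\<Sum>i\<in>UNIV. \<Sum>j\<in>UNIV. f (i,j))"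
  by (simp add: UNIV_Times_UNIV[symmetric] sum.cartesian_product del: UNIV_Times_UNIV)

lemma sum_if_out: "(\<Sum>i\<in>A. if P then f i else 0) = (if P then (\<Sum>i\<in>A. f i) else 0)"
  by simp

lemma mult_if01[simp]: "x * (if P then 1 else 0) = (if P then x else (0::'c::semiring_1))"
  "(if P then 1 else 0) * x = (if P then x else (0::'c::semiring_1))"
  "x * (if P then y else 0) = (if P then x * y else (0::'c::semiring_1))"
  "(if P then y else 0) * x = (if P then y * x else (0::'c::semiring_1))" by auto

lemma mtrace_mult: "mtrace (A ** B) = (\<Sum>i\<in>UNIV. \<Sum>j\<in>UNIV. A$i$j * B$j$i)"
  by (simp add: mtrace_def matrix_matrix_mult_def)

lemma tensor_mult: "tensor A B ** tensor C D = tensor (A ** C) (B ** D)"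
  by (simp add: tensor_def matrix_matrix_mult_def vec_eq_iff sum_pair
      sum_product mult_ac)

lemma madj_tensor: "madj (tensor A B) = tensor (madj A) (madj B)"
  by (simp add: tensor_def madj_def vec_eq_iff)

lemma madj_mat: "madj (mat c) = mat (cnj c)"
  by (simp add: madj_def mat_def vec_eq_iff)

lemma madj_diff: "madj (A - B) = madj A - madj B"
  by (simp add: madj_def vec_eq_iff)

lemma madj_scaleR: "madj (r *\<^sub>R A) = r *\<^sub>R madj A"
  by (simp add: madj_def vec_eq_iff)

lemma madj_unitm: "madj (unitm p q) = unitm q p"
  by (auto simp add: madj_def unitm_def vec_eq_iff)

lemma mtrace_tensor_1: "mtrace (R ** tensor X (mat 1)) = mtrace (ptraceB R ** X)"
  apply (simp add: mtrace_mult tensor_def ptraceB_def mat_def sum_pair sum_distrib_right sum_if_out)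
  by (rule sum.cong[OF refl], rule sum.swap)

lemma mtrace_tensor_2: "mtrace (R ** tensor (mat 1) Y) = mtrace (ptraceA R ** Y)"
proof -
  have "(\<Sum>a\<in>UNIV. \<Sum>b\<in>UNIV. \<Sum>c\<in>UNIV. R $ (a, b) $ (a, c) * Y $ c $ b)
     = (\<Sum>b\<in>UNIV. \<Sum>a\<in>UNIV. \<Sum>c\<in>UNIV. R $ (a, b) $ (a, c) * Y $ c $ b)" by (rule sum.swap)
  also have "\<dots> = (\<Sum>b\<in>UNIV. \<Sum>c\<in>UNIV. \<Sum>a\<in>UNIV. R $ (a, b) $ (a, c) * Y $ c $ b)"
    by (rule sum.cong[OF refl], rule sum.swap)
  finally have eq: "(\<Sum>a\<in>UNIV. \<Sum>b\<in>UNIV. \<Sum>c\<in>UNIV. R $ (a, b) $ (a, c) * Y $ c $ b) =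
     (\<Sum>b\<in>UNIV. \<Sum>c\<in>UNIV. \<Sum>a\<in>UNIV. R $ (a, b) $ (a, c) * Y $ c $ b)" .
  show ?thesis
    by (simp add: mtrace_mult tensor_def ptraceA_def mat_def sum_pair sum_distrib_right sum_if_out eq)
qed

definition bf :: "complex^'n^'n \<Rightarrow> ('n::finite \<Rightarrow> complex) \<Rightarrow> ('n \<Rightarrow> complex) \<Rightarrow> complex" where
  "bf M x y = (\<Sum>i\<in>UNIV. \<Sum>j\<in>UNIV. cnj (x i) * M$i$j * y j)"

lemma psd_bf: "psd M \<longleftrightarrow> (\<forall>v. Im (bf M v v) = 0 \<and> Re (bf M v v) \<ge> 0)"
proof
  assume "psd M"
  show "\<forall>v. Im (bf M v v) = 0 \<and> Re (bf M v v) \<ge> 0"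
  proof
    fix v :: "'a \<Rightarrow> complex"
    from \<open>psd M\<close> have "let q = (\<Sum>i\<in>UNIV. \<Sum>j\<in>UNIV. cnj ((\<chi> i. v i) $ i) * M $ i $ j * (\<chi> i. v i) $ j)
      in Im q = 0 \<and> Re q \<ge> 0" unfolding psd_def by blast
    then show "Im (bf M v v) = 0 \<and> Re (bf M v v) \<ge> 0" by (simp add: bf_def Let_def)
  qed
next
  assume h: "\<forall>v. Im (bf M v v) = 0 \<and> Re (bf M v v) \<ge> 0"
  show "psd M" unfolding psd_def
  proof
    fix v :: "complex^'a"
    show "let q = (\<Sum>i\<in>UNIV. \<Sum>j\<in>UNIV. cnj (v $ i) * M $ i $ j * v $ j) in Im q = 0 \<and> Re q \<ge> 0"
      using h[rule_format, of "\<lambda>i. v $ i"] by (simp add: bf_def Let_def)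
  qed
qed

lemma bf_add1: "bf M (\<lambda>k. x k + y k) z = bf M x z + bf M y z"
  by (simp add: bf_def ring_distribs sum.distrib)
lemma bf_add2: "bf M z (\<lambda>k. x k + y k) = bf M z x + bf M z y"
  by (simp add: bf_def ring_distribs sum.distrib)
lemma bf_smult1: "bf M (\<lambda>k. c * x k) z = cnj c * bf M x z"
  by (simp add: bf_def sum_distrib_left mult_ac)
lemma bf_smult2: "bf M z (\<lambda>k. c * x k) = c * bf M z x"
  by (simp add: bf_def sum_distrib_left mult_ac)
lemma cnj_if: "cnj (if P then a else b) = (if P then cnj a else cnj b)" by simp

lemma bf_delta: "bf M (\<lambda>k. if k = i then 1 else 0) (\<lambda>k. if k = j then 1 else 0) = M$i$j"
  by (simp add: bf_def if_distrib[of cnj] sum_if_out cong: if_cong)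

lemma psd_herm:
  assumes "psd M" shows "M$j$i = cnj (M$i$j)"
proof -
  let ?e = "\<lambda>i k. if k = i then (1::complex) else 0"
  have P: "\<And>v. Im (bf M v v) = 0" using assms psd_bf by blast
  have dI: "\<And>i. Im (M$i$i) = 0" using P[of "?e i" for i] by (simp add: bf_delta)
  have e1: "bf M (\<lambda>k. ?e i k + ?e j k) (\<lambda>k. ?e i k + ?e j k) = M$i$i + M$i$j + M$j$i + M$j$j"
    by (simp only: bf_add1 bf_add2 bf_delta) simp
  have e2: "bf M (\<lambda>k. ?e i k + \<i> * ?e j k) (\<lambda>k. ?e i k + \<i> * ?e j k) = M$i$i + \<i> * M$i$j - \<i> * M$j$i + M$j$j"
    by (simp only: bf_add1 bf_add2 bf_delta bf_smult1 bf_smult2) simp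
  have "Im (M$i$j) + Im (M$j$i) = 0" using P[of "\<lambda>k. ?e i k + ?e j k"] e1 dI[of i] dI[of j] by simp
  moreover have "Re (M$i$j) - Re (M$j$i) = 0" using P[of "\<lambda>k. ?e i k + \<i> * ?e j k"] e2 dI[of i] dI[of j] by simp
  ultimately show ?thesis by (simp add: complex_eq_iff)
qed

lemma bf_herm: assumes "psd M" shows "bf M y x = cnj (bf M x y)"
proof -
  have c: "\<And>i j. cnj (M$i$j) = M$j$i" using psd_herm[OF assms] by (metis complex_cnj_cnj)
  have "cnj (bf M x y) = (\<Sum>i\<in>UNIV. \<Sum>j\<in>UNIV. x i * M$j$i * cnj (y j))"
    by (simp add: bf_def c mult_ac)
  also have "\<dots> = (\<Sum>j\<in>UNIV. \<Sum>i\<in>UNIV. x i * M$j$i * cnj (y j))" by (rule sum.swap)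
  also have "\<dots> = bf M y x" by (simp add: bf_def mult_ac)
  finally show ?thesis by simp
qed

lemma cs_core:
  fixes A B :: real and z :: complex
  assumes "A \<ge> 0" "B \<ge> 0" and h: "\<And>c. 0 \<le> A + 2 * Re (c * z) + (cmod c)^2 * B"
  shows "(cmod z)^2 \<le> A * B"
proof (cases "B > 0")
  case True
  define c where "c = - cnj z / complex_of_real B"
  have "c * z = - complex_of_real ((cmod z)^2 / B)"
    unfolding c_def by (simp add: complex_norm_square[symmetric] mult.commute)
  then have 1: "Re (c * z) = - ((cmod z)^2 / B)" by simp
  have 2: "(cmod c)^2 * B = (cmod z)^2 / B"
    using True unfolding c_def by (simp add: norm_divide power_divide power2_eq_square)
  have "0 \<le> A - (cmod z)^2 / B" using h[of c] 1 2 by simp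
  then show ?thesis using True by (simp add: field_simps)
next
  case False
  then have B0: "B = 0" using assms by simp
  show ?thesis
  proof (rule ccontr)
    assume "\<not> ?thesis"
    then have zp: "(cmod z)^2 > 0" using B0 by simp
    define c where "c = complex_of_real (- (A+1) / (2 * (cmod z)^2)) * cnj z"
    have "c * z = complex_of_real (- (A+1) / (2 * (cmod z)^2)) * complex_of_real ((cmod z)^2)"
    proof -
      have "cnj z * z = complex_of_real ((cmod z)^2)" by (metis complex_norm_square mult.commute)
      then show ?thesis unfolding c_def by (simp only: mult.assoc)
    qed
    also have "\<dots> = complex_of_real (- (A+1) / 2)"
    proof -
      have "(- (A+1) / (2 * (cmod z)^2)) * (cmod z)^2 = - (A+1) / 2" using zp by (simp add: field_simps)
      then show ?thesis by (metis of_real_mult)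
    qed
    finally have cz: "c * z = complex_of_real (- (A+1) / 2)" .
    have "Re (c * z) = - (A+1)/2" unfolding cz by (rule Re_complex_of_real)
    then show False using h[of c] B0 by simp
  qed
qed
lemma bf_expand_re:
  assumes "psd M"
  shows "Re (bf M (\<lambda>k. x k + c * y k) (\<lambda>k. x k + c * y k))
       = Re (bf M x x) + 2 * Re (c * bf M x y) + (cmod c)^2 * Re (bf M y y)"
proof -
  have P: "\<And>v. Im (bf M v v) = 0 \<and> Re (bf M v v) \<ge> 0" using assms psd_bf by blast
  have e: "bf M (\<lambda>k. x k + c * y k) (\<lambda>k. x k + c * y k)
      = bf M x x + c * bf M x y + cnj c * bf M y x + cnj c * (c * bf M y y)"
    by (simp only: bf_add1 bf_add2 bf_smult1 bf_smult2 distrib_left add.assoc)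
  have h: "bf M y x = cnj (bf M x y)" using bf_herm[OF assms, of y x] .
  have cc: "cnj c * c = complex_of_real ((cmod c)^2)" by (metis complex_norm_square mult.commute)
  have r1: "Re (cnj c * (c * bf M y y)) = (cmod c)^2 * Re (bf M y y)"
  proof -
    have "cnj c * (c * bf M y y) = complex_of_real ((cmod c)^2) * bf M y y"
      by (simp only: mult.assoc[symmetric] cc)
    then show ?thesis by (simp only:) simp
  qed
  have r2: "Re (cnj c * bf M y x) = Re (c * bf M x y)" unfolding h by simp
  show ?thesis unfolding e plus_complex.sel r1 r2 by simp
qed

lemma bf_cs: assumes "psd M" shows "(cmod (bf M x y))^2 \<le> Re (bf M x x) * Re (bf M y y)"
proof -
  have P: "\<And>v. Im (bf M v v) = 0 \<and> Re (bf M v v) \<ge> 0" using assms psd_bf by blast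
  show ?thesis
  proof (rule cs_core)
    show "0 \<le> Re (bf M x x)" "0 \<le> Re (bf M y y)" using P by auto
    fix c
    have "0 \<le> Re (bf M (\<lambda>k. x k + c * y k) (\<lambda>k. x k + c * y k))" using P by blast
    then show "0 \<le> Re (bf M x x) + 2 * Re (c * bf M x y) + (cmod c)^2 * Re (bf M y y)"
      unfolding bf_expand_re[OF assms] .
  qed
qed

definition H :: "complex^'n^'n \<Rightarrow> complex^'n^'n \<Rightarrow> complex^'n::finite^'n \<Rightarrow> complex" where
  "H M P Q = mtrace (M ** (P ** madj Q))"

lemma H_bf: "H M P Q = (\<Sum>k\<in>UNIV. bf M (\<lambda>r. Q$r$k) (\<lambda>s. P$s$k))"
proof -
  have "H M P Q = (\<Sum>i\<in>UNIV. \<Sum>j\<in>UNIV. \<Sum>k\<in>UNIV. cnj (Q$i$k) * M$i$j * P$j$k)"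
    by (simp add: H_def mtrace_def matrix_matrix_mult_def madj_def sum_distrib_left mult_ac)
  also have "\<dots> = (\<Sum>i\<in>UNIV. \<Sum>k\<in>UNIV. \<Sum>j\<in>UNIV. cnj (Q$i$k) * M$i$j * P$j$k)"
    by (rule sum.cong[OF refl], rule sum.swap)
  also have "\<dots> = (\<Sum>k\<in>UNIV. \<Sum>i\<in>UNIV. \<Sum>j\<in>UNIV. cnj (Q$i$k) * M$i$j * P$j$k)"
    by (rule sum.swap)
  finally show ?thesis by (simp add: bf_def)
qed

lemma H_psd: assumes "psd M" shows "Im (H M P P) = 0" "Re (H M P P) \<ge> 0"
  using assms unfolding H_bf psd_bf by (auto simp: Im_sum Re_sum intro: sum_nonneg)

lemma H_cs: assumes "psd M" shows "(cmod (H M P Q))^2 \<le> Re (H M P P) * Re (H M Q Q)"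
proof -
  have "(cmod (H M P Q))^2 \<le> Re (H M Q Q) * Re (H M P P)"
  proof (rule cs_core)
    show "0 \<le> Re (H M Q Q)" "0 \<le> Re (H M P P)" using H_psd[OF assms] by auto
    fix c
    have "0 \<le> (\<Sum>k\<in>UNIV. Re (bf M (\<lambda>r. Q$r$k + c * P$r$k) (\<lambda>r. Q$r$k + c * P$r$k)))"
      using assms unfolding psd_bf by (auto intro: sum_nonneg)
    also have "\<dots> = (\<Sum>k\<in>UNIV. Re (bf M (\<lambda>r. Q$r$k) (\<lambda>r. Q$r$k)) + 2 * Re (c * bf M (\<lambda>r. Q$r$k) (\<lambda>r. P$r$k))
        + (cmod c)^2 * Re (bf M (\<lambda>r. P$r$k) (\<lambda>r. P$r$k)))"
      by (rule sum.cong[OF refl], rule bf_expand_re[OF assms])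
    also have "\<dots> = Re (H M Q Q) + 2 * Re (c * H M P Q) + (cmod c)^2 * Re (H M P P)"
      by (simp add: H_bf sum.distrib Re_sum sum_distrib_left)
    finally show "0 \<le> Re (H M Q Q) + 2 * Re (c * H M P Q) + (cmod c)^2 * Re (H M P P)" .
  qed
  then show ?thesis by (simp add: mult.commute)
qed

lemma bf_unit_left: "bf M (\<lambda>k. if k = p then 1 else 0) v = (\<Sum>l\<in>UNIV. M$p$l * v l)"
  by (simp add: bf_def if_distrib[of cnj] sum_if_out cong: if_cong)

lemma psd_diag: assumes "psd M" shows "Im (M$p$p) = 0" "Re (M$p$p) \<ge> 0"
  using assms unfolding psd_bf by (metis bf_delta)+

lemma psd_gram_aux:
  assumes "finite S"
  shows "\<And>M::complex^'n::finite^'n. psd M \<Longrightarrow> (\<forall>j l. j \<notin> S \<or> l \<notin> S \<longrightarrow> M$j$l = 0) \<Longrightarrow>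
     \<exists>(n::nat) u. \<forall>j l. M$j$l = (\<Sum>m<n. u m j * cnj (u m l))"
  using assms
proof (induction S rule: finite_induct)
  case (empty M)
  have "\<forall>j l. M$j$l = 0" using empty.prems(2) by simp
  then show ?case by (intro exI[where x="0::nat"]) simp
next
  case (insert p S M)
  let ?e = "\<lambda>k. if k = p then (1::complex) else 0"
  have herm: "\<And>j l. M$j$l = cnj (M$l$j)" by (rule psd_herm[OF insert.prems(1)])
  show ?case
  proof (cases "Re (M$p$p) = 0")
    case True
    have row: "M$p$j = 0" for j
    proof -
      have "(cmod (bf M ?e (\<lambda>k. if k = j then 1 else 0)))^2 \<le>
          Re (bf M ?e ?e) * Re (bf M (\<lambda>k. if k = j then 1 else 0) (\<lambda>k. if k = j then 1 else 0))"
        by (rule bf_cs[OF insert.prems(1)])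
      then show ?thesis using True by (simp add: bf_delta)
    qed
    have "\<forall>j l. j \<notin> S \<or> l \<notin> S \<longrightarrow> M$j$l = 0"
      using insert.prems(2) row herm by (metis complex_cnj_zero insertE)
    then show ?thesis using insert.IH insert.prems(1) by blast
  next
    case False
    have dpos: "Re (M$p$p) > 0" using False psd_diag(2)[OF insert.prems(1), of p] by linarith
    have dreal: "M$p$p = complex_of_real (Re (M$p$p))" using psd_diag[OF insert.prems(1)]
      by (simp add: complex_eq_iff)
    define s where "s = sqrt (Re (M$p$p))"
    have spos: "s > 0" using dpos by (simp add: s_def)
    have ss: "M$p$p = complex_of_real s * complex_of_real s"
      using dreal dpos by (simp add: s_def flip: of_real_mult)
    define w where "w j = M$j$p / complex_of_real s" for j
    define M' where "M' = (\<chi> j l. M$j$l - w j * cnj (w l))"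
    have cw: "cnj (w l) = M$p$l / complex_of_real s" for l
      unfolding w_def by (simp add: herm[of p l])
    have wp: "w p = complex_of_real s" unfolding w_def ss using spos by simp
    have psdM': "psd M'"
      unfolding psd_bf
    proof
      fix v
      define g where "g = (\<Sum>l\<in>UNIV. M$p$l * v l)"
      have e1: "bf M' v v = bf M v v - cnj (g / complex_of_real s) * (g / complex_of_real s)"
      proof -
        have "bf M' v v = (\<Sum>i\<in>UNIV. \<Sum>j\<in>UNIV. cnj (v i) * M$i$j * v j - cnj (v i) * (w i * cnj (w j)) * v j)"
          by (simp add: bf_def M'_def right_diff_distrib left_diff_distrib)
        also have "\<dots> = bf M v v - (\<Sum>i\<in>UNIV. \<Sum>j\<in>UNIV. cnj (v i) * (w i * cnj (w j)) * v j)"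
          by (simp add: bf_def sum_subtractf)
        also have "(\<Sum>i\<in>UNIV. \<Sum>j\<in>UNIV. cnj (v i) * (w i * cnj (w j)) * v j)
            = (\<Sum>i\<in>UNIV. cnj (v i) * w i) * (\<Sum>l\<in>UNIV. cnj (w l) * v l)"
          unfolding sum_product by (simp add: mult.assoc)
        finally have "bf M' v v = bf M v v - (\<Sum>i\<in>UNIV. cnj (v i) * w i) * (\<Sum>l\<in>UNIV. cnj (w l) * v l)" .
        moreover have "(\<Sum>l\<in>UNIV. cnj (w l) * v l) = g / complex_of_real s"
          unfolding cw g_def by (simp add: sum_divide_distrib)
        moreover have "(\<Sum>i\<in>UNIV. cnj (v i) * w i) = cnj (g / complex_of_real s)"
          unfolding g_def w_def by (simp add: sum_divide_distrib mult.commute herm[of _ p, symmetric])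
        ultimately show ?thesis by simp
      qed
      have cs: "(cmod g)^2 \<le> Re (M$p$p) * Re (bf M v v)"
        using bf_cs[OF insert.prems(1), of ?e v] by (simp add: bf_delta bf_unit_left g_def)
      have P: "Im (bf M v v) = 0" "Re (bf M v v) \<ge> 0" using insert.prems(1) unfolding psd_bf by auto
      have n: "cnj (g / complex_of_real s) * (g / complex_of_real s) = complex_of_real ((cmod g)^2 / s^2)"
        by (simp add: complex_norm_square[symmetric] power_divide mult.commute power2_eq_square)
      have "(cmod g)^2 / s^2 \<le> Re (bf M v v)"
        using cs dpos spos by (simp add: s_def field_simps)
      then show "Im (bf M' v v) = 0 \<and> Re (bf M' v v) \<ge> 0"
        unfolding e1 n using P by simp
    qed
    have van: "\<forall>j l. j \<notin> S \<or> l \<notin> S \<longrightarrow> M'$j$l = 0"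
    proof (intro allI impI)
      fix j l assume jl: "j \<notin> S \<or> l \<notin> S"
      have z1: "k \<notin> insert p S \<Longrightarrow> M$k$p = 0 \<and> M$p$k = 0" for k
        using insert.prems(2) by auto
      show "M'$j$l = 0"
      proof (cases "j = p \<or> l = p")
        case True
        then show ?thesis
        proof
          assume "j = p" then show ?thesis unfolding M'_def using wp cw spos by simp
        next
          assume "l = p" then show ?thesis unfolding M'_def using wp spos
            by (simp add: cw ss w_def)
        qed
      next
        case False
        then have "j \<notin> insert p S \<or> l \<notin> insert p S" using jl by auto
        then show ?thesis unfolding M'_def using insert.prems(2) z1 by (auto simp: w_def cw)
      qed
    qed
    obtain n :: nat and u where u: "\<forall>j l. M'$j$l = (\<Sum>m<n. u m j * cnj (u m l))"
      using insert.IH[OF psdM' van] by blast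
    define u' where "u' m = (if m < n then u m else w)" for m
    have "\<forall>j l. M$j$l = (\<Sum>m<Suc n. u' m j * cnj (u' m l))"
    proof (intro allI)
      fix j l
      have "M$j$l = M'$j$l + w j * cnj (w l)" unfolding M'_def by simp
      also have "\<dots> = (\<Sum>m<n. u' m j * cnj (u' m l)) + u' n j * cnj (u' n l)"
        using u by (simp add: u'_def)
      finally show "M$j$l = (\<Sum>m<Suc n. u' m j * cnj (u' m l))" by simp
    qed
    then show ?thesis by blast
  qed
qed

lemma psd_gram: "psd (M::complex^'n::finite^'n) \<Longrightarrow> \<exists>(n::nat) u. \<forall>j l. M$j$l = (\<Sum>m<n. u m j * cnj (u m l))"
  using psd_gram_aux[of "UNIV::'n set" M] by simp

lemma sum4:
  fixes f :: "'a::finite \<Rightarrow> 'b::finite \<Rightarrow> complex" and A :: "'a \<Rightarrow> 'c::finite \<Rightarrow> complex" and g :: "'c \<Rightarrow> 'd::finite \<Rightarrow> complex"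
  shows "(\<Sum>a\<in>UNIV. \<Sum>b\<in>UNIV. \<Sum>c\<in>UNIV. \<Sum>d\<in>UNIV. f a b * A a c * g c d) =
  (\<Sum>a\<in>UNIV. \<Sum>c\<in>UNIV. (\<Sum>b\<in>UNIV. f a b) * A a c * (\<Sum>d\<in>UNIV. g c d))"
proof -
  have "(\<Sum>a\<in>UNIV. \<Sum>c\<in>UNIV. (\<Sum>b\<in>UNIV. f a b) * A a c * (\<Sum>d\<in>UNIV. g c d)) =
     (\<Sum>a\<in>UNIV. \<Sum>c\<in>UNIV. \<Sum>b\<in>UNIV. \<Sum>d\<in>UNIV. f a b * A a c * g c d)"
    by (simp only: sum_distrib_left sum_distrib_right)
      (rule sum.cong[OF refl], rule sum.cong[OF refl], rule sum.swap)
  also have "\<dots> = (\<Sum>a\<in>UNIV. \<Sum>b\<in>UNIV. \<Sum>c\<in>UNIV. \<Sum>d\<in>UNIV. f a b * A a c * g c d)"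
    by (rule sum.cong[OF refl], rule sum.swap)
  finally show ?thesis by simp
qed

lemma psd_tensor:
  fixes A :: "complex^'a::finite^'a" and B :: "complex^'b::finite^'b"
  assumes "psd A" "psd B" shows "psd (tensor A B)"
proof -
  obtain n :: nat and u where u: "\<forall>j l. B$j$l = (\<Sum>m<n. u m j * cnj (u m l))"
    using psd_gram[OF assms(2)] by blast
  show ?thesis unfolding psd_bf
  proof
    fix v :: "'a \<times> 'b \<Rightarrow> complex"
    define \<alpha> where "\<alpha> m c = (\<Sum>d\<in>UNIV. cnj (u m d) * v (c,d))" for m c
    have "bf (tensor A B) v v = (\<Sum>a\<in>UNIV. \<Sum>b\<in>UNIV. \<Sum>c\<in>UNIV. \<Sum>d\<in>UNIV. \<Sum>m<n.
        cnj (v (a,b)) * A$a$c * (u m b * cnj (u m d)) * v (c,d))"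
      by (simp add: bf_def tensor_def sum_pair u sum_distrib_left sum_distrib_right mult_ac)
    also have "\<dots> = (\<Sum>m<n. \<Sum>a\<in>UNIV. \<Sum>b\<in>UNIV. \<Sum>c\<in>UNIV. \<Sum>d\<in>UNIV.
        (cnj (v (a,b)) * u m b) * A$a$c * (cnj (u m d) * v (c,d)))"
      by (simp only: sum.swap[where B="{..<n}"]) (simp add: mult_ac)
    also have "\<dots> = (\<Sum>m<n. bf A (\<alpha> m) (\<alpha> m))"
      by (simp only: sum4) (simp add: bf_def \<alpha>_def mult_ac)
    finally have e: "bf (tensor A B) v v = (\<Sum>m<n. bf A (\<alpha> m) (\<alpha> m))" .
    show "Im (bf (tensor A B) v v) = 0 \<and> Re (bf (tensor A B) v v) \<ge> 0"
      using assms(1) unfolding e psd_bf by (auto simp: Im_sum Re_sum intro: sum_nonneg)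
  qed
qed

lemma mtrace_tensor: "mtrace (tensor A B) = mtrace A * mtrace B"
  by (simp add: mtrace_def tensor_def sum_pair sum_product)

lemma density_tensor: "density A \<Longrightarrow> density B \<Longrightarrow> density (tensor A B)"
  by (simp add: density_def psd_tensor mtrace_tensor)

lemma mtrace_ptraceB: "mtrace (ptraceB R) = mtrace R"
  by (simp add: mtrace_def ptraceB_def sum_pair)

lemma mtrace_ptraceA: "mtrace (ptraceA R) = mtrace R"
  by (simp add: mtrace_def ptraceA_def sum_pair) (rule sum.swap)

lemma psd_ptraceB:
  fixes R :: "complex^('a::finite\<times>'b::finite)^('a\<times>'b)"
  assumes "psd R" shows "psd (ptraceB R)"
  unfolding psd_bf
proof
  fix v :: "'a \<Rightarrow> complex"
  define w where "w (b::'b) (x::'a\<times>'b) = (if snd x = b then v (fst x) else 0)" for b x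
  have "(\<Sum>b\<in>UNIV. bf R (w b) (w b)) = (\<Sum>b\<in>UNIV. \<Sum>a\<in>UNIV. \<Sum>c\<in>UNIV. cnj (v a) * R$(a,b)$(c,b) * v c)"
    by (simp add: bf_def w_def sum_pair if_distrib[of cnj] sum_if_out cong: if_cong)
  also have "\<dots> = (\<Sum>a\<in>UNIV. \<Sum>b\<in>UNIV. \<Sum>c\<in>UNIV. cnj (v a) * R$(a,b)$(c,b) * v c)" by (rule sum.swap)
  also have "\<dots> = (\<Sum>a\<in>UNIV. \<Sum>c\<in>UNIV. \<Sum>b\<in>UNIV. cnj (v a) * R$(a,b)$(c,b) * v c)"
    by (rule sum.cong[OF refl], rule sum.swap)
  also have "\<dots> = bf (ptraceB R) v v"
    by (simp add: bf_def ptraceB_def sum_distrib_left sum_distrib_right)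
  finally have e: "bf (ptraceB R) v v = (\<Sum>b\<in>UNIV. bf R (w b) (w b))" by simp
  show "Im (bf (ptraceB R) v v) = 0 \<and> Re (bf (ptraceB R) v v) \<ge> 0"
    using assms unfolding e psd_bf by (auto simp: Im_sum Re_sum intro: sum_nonneg)
qed

lemma psd_ptraceA:
  fixes R :: "complex^('a::finite\<times>'b::finite)^('a\<times>'b)"
  assumes "psd R" shows "psd (ptraceA R)"
  unfolding psd_bf
proof
  fix v :: "'b \<Rightarrow> complex"
  define w where "w (a::'a) (x::'a\<times>'b) = (if fst x = a then v (snd x) else 0)" for a x
  have "(\<Sum>a\<in>UNIV. bf R (w a) (w a)) = (\<Sum>a\<in>UNIV. \<Sum>b\<in>UNIV. \<Sum>d\<in>UNIV. cnj (v b) * R$(a,b)$(a,d) * v d)"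
    by (simp add: bf_def w_def sum_pair if_distrib[of cnj] sum_if_out cong: if_cong)
  also have "\<dots> = (\<Sum>b\<in>UNIV. \<Sum>a\<in>UNIV. \<Sum>d\<in>UNIV. cnj (v b) * R$(a,b)$(a,d) * v d)" by (rule sum.swap)
  also have "\<dots> = (\<Sum>b\<in>UNIV. \<Sum>d\<in>UNIV. \<Sum>a\<in>UNIV. cnj (v b) * R$(a,b)$(a,d) * v d)"
    by (rule sum.cong[OF refl], rule sum.swap)
  also have "\<dots> = bf (ptraceA R) v v"
    by (simp add: bf_def ptraceA_def sum_distrib_left sum_distrib_right)
  finally have e: "bf (ptraceA R) v v = (\<Sum>a\<in>UNIV. bf R (w a) (w a))" by simp
  show "Im (bf (ptraceA R) v v) = 0 \<and> Re (bf (ptraceA R) v v) \<ge> 0"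
    using assms unfolding e psd_bf by (auto simp: Im_sum Re_sum intro: sum_nonneg)
qed

lemma density_ptraceB: "density R \<Longrightarrow> density (ptraceB R)"
  by (simp add: density_def psd_ptraceB mtrace_ptraceB)
lemma density_ptraceA: "density R \<Longrightarrow> density (ptraceA R)"
  by (simp add: density_def psd_ptraceA mtrace_ptraceA)

lemma cscaleR: "r *\<^sub>R (z::complex) = complex_of_real r * z" by (simp add: scaleR_conv_of_real)

lemma if_conj0: "(if P \<and> Q then x else 0) = (if P then (if Q then x else 0) else 0)" by simp

lemma H_sum: "H M P Q = (\<Sum>r\<in>UNIV. \<Sum>s\<in>UNIV. \<Sum>k\<in>UNIV. M$r$s * P$s$k * cnj (Q$r$k))"
  by (simp add: H_def mtrace_def matrix_matrix_mult_def madj_def sum_distrib_left mult_ac)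

lemma mtrace_diff: "mtrace (R ** (A - B)) = mtrace (R ** A) - mtrace (R ** B)"
  by (simp add: mtrace_mult right_diff_distrib sum_subtractf)

lemma mtrace_scaleR: "mtrace (R ** (r *\<^sub>R A)) = of_real r * mtrace (R ** A)"
  by (simp add: mtrace_mult sum_distrib_left cscaleR mult_ac)

lemma mtrace_unitm: "mtrace (R ** unitm p q) = R$q$p"
  by (simp add: mtrace_mult unitm_def if_conj0 sum_if_out cong: if_cong)

lemma mtrace_mat: "mtrace (R ** mat c) = c * mtrace R"
  unfolding mtrace_mult by (simp add: mtrace_def mat_def sum_distrib_left mult_ac sum_if_out cong: if_cong)

lemma tensor_diff1: "tensor (A - B) C = tensor A C - tensor B C"
  by (simp add: tensor_def vec_eq_iff left_diff_distrib)
lemma tensor_diff2: "tensor C (A - B) = tensor C A - tensor C B"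
  by (simp add: tensor_def vec_eq_iff right_diff_distrib)
lemma tensor_scaleR1: "tensor (r *\<^sub>R A) C = r *\<^sub>R tensor A C"
  by (simp add: tensor_def vec_eq_iff cscaleR mult_ac)
lemma tensor_scaleR2: "tensor C (r *\<^sub>R A) = r *\<^sub>R tensor C A"
  by (simp add: tensor_def vec_eq_iff cscaleR mult_ac)

lemma mtrace_tensor_mat1: "mtrace (R ** tensor (mat a) W) = a * mtrace (R ** tensor (mat 1) W)"
  unfolding mtrace_mult by (simp add: tensor_def mat_def sum_distrib_left mult_ac cong: if_cong)
lemma mtrace_tensor_mat2: "mtrace (R ** tensor W (mat a)) = a * mtrace (R ** tensor W (mat 1))"
  unfolding mtrace_mult by (simp add: tensor_def mat_def sum_distrib_left mult_ac cong: if_cong)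

lemma mtrace_tensor_units: "mtrace (R ** tensor (unitm k i) (unitm l j)) = R$(i,j)$(k,l)"
  unfolding mtrace_mult by (simp add: tensor_def unitm_def sum_pair if_conj0 sum_if_out cong: if_cong)

lemma madj_Z: "madj (unitm p q - mat b) = unitm q p - mat (cnj b)"
  by (simp add: madj_diff madj_unitm madj_mat)

lemma F_expand:
  "mtrace (R ** tensor (unitm k i - mat a) (unitm l j - mat c)) =
   R$(i,j)$(k,l) - c * ptraceB R $ i $ k - a * ptraceA R $ j $ l + a * c * mtrace R"
proof -
  have 1: "mtrace (R ** tensor (unitm k i) (mat c)) = c * ptraceB R $ i $ k"
    by (subst mtrace_tensor_mat2) (simp add: mtrace_tensor_1 mtrace_unitm)
  have 2: "mtrace (R ** tensor (mat a) (unitm l j)) = a * ptraceA R $ j $ l"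
    by (subst mtrace_tensor_mat1) (simp add: mtrace_tensor_2 mtrace_unitm)
  have 3: "mtrace (R ** tensor (mat a) (mat c)) = a * c * mtrace R"
    by (subst mtrace_tensor_mat1, subst mtrace_tensor_mat2) (simp add: mtrace_tensor_1 mtrace_ptraceB)
  show ?thesis
    by (simp only: tensor_diff1 tensor_diff2 mtrace_diff mtrace_tensor_units 1 2 3) (simp add: algebra_simps)
qed

lemma H_Z:
  assumes "psd M" "mtrace M = 1"
  shows "H M (unitm p q - mat (M$q$p)) (unitm p q - mat (M$q$p)) = M$p$p - of_real ((cmod (M$q$p))^2)"
proof -
  have h: "M$p$q = cnj (M$q$p)" by (rule psd_herm[OF assms(1)])
  have t: "(\<Sum>r\<in>UNIV. M$r$r) = 1" using assms(2) by (simp add: mtrace_def)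
  have "H M (unitm p q - mat (M$q$p)) (unitm p q - mat (M$q$p)) =
     M$p$p - cnj (M$q$p) * M$q$p - M$q$p * M$p$q + M$q$p * cnj (M$q$p) * (\<Sum>r\<in>UNIV. M$r$r)"
    by (simp add: H_sum unitm_def mat_def algebra_simps sum_subtractf sum.distrib sum_if_out
        if_distrib[of cnj] if_conj0 sum_distrib_left cong: if_cong)
  also have "\<dots> = M$p$p - of_real ((cmod (M$q$p))^2)"
  proof -
    have "M$q$p * cnj (M$q$p) = of_real ((cmod (M$q$p))^2)" by (rule complex_norm_square[symmetric])
    then show ?thesis unfolding t h by (simp add: mult.commute)
  qed
  finally show ?thesis .
qed

lemma F_H: "mtrace (R ** tensor X (madj Y)) = H R (tensor X (mat 1)) (tensor (mat 1) Y)"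
  by (simp add: H_def madj_tensor madj_mat tensor_mult)

lemma H_X: "H R (tensor X (mat 1)) (tensor X (mat 1)) = mtrace (ptraceB R ** (X ** madj X))"
  by (simp add: H_def madj_tensor madj_mat tensor_mult mtrace_tensor_1)

lemma H_Y: "H R (tensor (mat 1) Y) (tensor (mat 1) Y) = mtrace (ptraceA R ** (Y ** madj Y))"
  by (simp add: H_def madj_tensor madj_mat tensor_mult mtrace_tensor_2)

lemma F_cs: "psd R \<Longrightarrow> (cmod (mtrace (R ** tensor X (madj Y))))^2 \<le>
   Re (mtrace (ptraceB R ** (X ** madj X))) * Re (mtrace (ptraceA R ** (Y ** madj Y)))"
  unfolding F_H H_X[symmetric] H_Y[symmetric] by (rule H_cs)

lemma maxcorr_bdd:
  fixes R :: "complex^('a::finite\<times>'b::finite)^('a\<times>'b)"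
  assumes "psd R"
  shows "bdd_above (insert 0 {cmod (mtrace (R ** tensor X (madj Y))) | X Y.
      mtrace (ptraceB R ** X) = 0 \<and> mtrace (ptraceA R ** Y) = 0 \<and>
      mtrace (ptraceB R ** (X ** madj X)) = 1 \<and> mtrace (ptraceA R ** (Y ** madj Y)) = 1})"
proof (rule bdd_aboveI[where M=1])
  fix x assume "x \<in> insert 0 {cmod (mtrace (R ** tensor X (madj Y))) | X Y.
      mtrace (ptraceB R ** X) = 0 \<and> mtrace (ptraceA R ** Y) = 0 \<and>
      mtrace (ptraceB R ** (X ** madj X)) = 1 \<and> mtrace (ptraceA R ** (Y ** madj Y)) = 1}"
  then show "x \<le> 1"
  proof
    assume "x = 0" then show ?thesis by simp
  next
    assume "x \<in> {cmod (mtrace (R ** tensor X (madj Y))) | X Y.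
      mtrace (ptraceB R ** X) = 0 \<and> mtrace (ptraceA R ** Y) = 0 \<and>
      mtrace (ptraceB R ** (X ** madj X)) = 1 \<and> mtrace (ptraceA R ** (Y ** madj Y)) = 1}"
    then obtain X Y where x: "x = cmod (mtrace (R ** tensor X (madj Y)))"
      and c: "mtrace (ptraceB R ** (X ** madj X)) = 1" "mtrace (ptraceA R ** (Y ** madj Y)) = 1"
      by blast
    have "x^2 \<le> 1" using F_cs[OF assms, of X Y] c x by simp
    then show ?thesis using x using power2_le_imp_le[of x 1] by simp
  qed
qed

lemma maxcorr_nonneg: "psd R \<Longrightarrow> maxcorr R \<ge> 0"
  unfolding maxcorr_def by (rule cSup_upper[OF insertI1 maxcorr_bdd])

lemma maxcorr_upper:
  assumes "psd R" "mtrace (ptraceB R ** X) = 0" "mtrace (ptraceA R ** Y) = 0"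
    "mtrace (ptraceB R ** (X ** madj X)) = 1" "mtrace (ptraceA R ** (Y ** madj Y)) = 1"
  shows "cmod (mtrace (R ** tensor X (madj Y))) \<le> maxcorr R"
  unfolding maxcorr_def
  by (rule cSup_upper[OF _ maxcorr_bdd[OF assms(1)]]) (use assms in blast)

lemma maxcorr_product:
  assumes "density A" "density B"
  shows "maxcorr (tensor A B) = 0"
proof -
  have pB: "ptraceB (tensor A B) = A" using assms(2)
    by (simp add: ptraceB_def tensor_def vec_eq_iff density_def mtrace_def flip: sum_distrib_left)
  define S where "S = {cmod (mtrace (tensor A B ** tensor X (madj Y))) | X Y.
      mtrace (ptraceB (tensor A B) ** X) = 0 \<and> mtrace (ptraceA (tensor A B) ** Y) = 0 \<and>
      mtrace (ptraceB (tensor A B) ** (X ** madj X)) = 1 \<and> mtrace (ptraceA (tensor A B) ** (Y ** madj Y)) = 1}"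
  have "S \<subseteq> {0}" unfolding S_def by (auto simp: tensor_mult mtrace_tensor pB)
  then have e: "insert 0 S = {0}" by blast
  have "Sup (insert 0 S) = 0" unfolding e by simp
  then show ?thesis unfolding maxcorr_def S_def .
qed

lemma diag_le1: assumes "density M" shows "Re (M$p$p) \<le> 1"
proof -
  have "Re (M$p$p) \<le> (\<Sum>r\<in>UNIV. Re (M$r$r))"
    by (rule member_le_sum) (use assms psd_diag(2) in \<open>auto simp: density_def\<close>)
  also have "\<dots> = 1" using assms by (simp add: density_def mtrace_def flip: Re_sum)
  finally show ?thesis .
qed

lemma mult_scaleR_both: "(r *\<^sub>R A) ** (s *\<^sub>R (B::complex^'n::finite^'m)) = (r * s) *\<^sub>R ((A::complex^'m^'k) ** B)"
  by (simp add: matrix_matrix_mult_def vec_eq_iff cscaleR sum_distrib_left mult_ac)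

lemma entry_bound:
  fixes \<tau> :: "complex^('a::finite\<times>'b::finite)^('a\<times>'b)"
  assumes dens: "density \<tau>"
  shows "cmod (\<tau>$(i,j)$(k,l) - ptraceB \<tau> $ i $ k * ptraceA \<tau> $ j $ l) \<le> maxcorr \<tau>"
proof -
  let ?A = "ptraceB \<tau>" and ?B = "ptraceA \<tau>"
  have psd: "psd \<tau>" and tr: "mtrace \<tau> = 1" using dens by (auto simp: density_def)
  have dA: "density ?A" and dB: "density ?B" using dens density_ptraceB density_ptraceA by blast+
  have pA: "psd ?A" "mtrace ?A = 1" and pB: "psd ?B" "mtrace ?B = 1" using dA dB by (auto simp: density_def)
  define a where "a = ?A $ i $ k"
  define b where "b = ?B $ l $ j"
  define X where "X = unitm k i - mat a"
  define Y where "Y = unitm j l - mat b"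
  have cb: "cnj b = ?B $ j $ l" unfolding b_def using psd_herm[OF pB(1), of j l] by simp
  have madjY: "madj Y = unitm l j - mat (cnj b)" unfolding Y_def by (rule madj_Z)
  have F: "mtrace (\<tau> ** tensor X (madj Y)) = \<tau>$(i,j)$(k,l) - ?A $ i $ k * ?B $ j $ l"
    unfolding madjY X_def F_expand tr cb a_def by (simp add: algebra_simps)
  define vX where "vX = mtrace (?A ** (X ** madj X))"
  define vY where "vY = mtrace (?B ** (Y ** madj Y))"
  have vX: "vX = ?A$k$k - of_real ((cmod a)^2)"
    unfolding vX_def H_def[symmetric] X_def a_def by (rule H_Z[OF pA])
  have vY: "vY = ?B$j$j - of_real ((cmod b)^2)"
    unfolding vY_def H_def[symmetric] Y_def b_def by (rule H_Z[OF pB])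
  have vXr: "Im vX = 0" "Re vX \<ge> 0" using H_psd[OF pA(1), of X] unfolding vX_def H_def by auto
  have vYr: "Im vY = 0" "Re vY \<ge> 0" using H_psd[OF pB(1), of Y] unfolding vY_def H_def by auto
  have vX1: "Re vX \<le> 1"
  proof -
    have "Re vX = Re (?A$k$k) - (cmod a)^2" unfolding vX by simp
    then show ?thesis using diag_le1[OF dA, of k] zero_le_power2[of "cmod a"] by linarith
  qed
  have vY1: "Re vY \<le> 1"
  proof -
    have "Re vY = Re (?B$j$j) - (cmod b)^2" unfolding vY by simp
    then show ?thesis using diag_le1[OF dB, of j] zero_le_power2[of "cmod b"] by linarith
  qed
  have cX: "mtrace (?A ** X) = 0" unfolding X_def mtrace_diff mtrace_unitm mtrace_mat pA(2) a_def by simp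
  have cY: "mtrace (?B ** Y) = 0" unfolding Y_def mtrace_diff mtrace_unitm mtrace_mat pB(2) b_def by simp
  have cs: "(cmod (mtrace (\<tau> ** tensor X (madj Y))))^2 \<le> Re vX * Re vY"
    unfolding vX_def vY_def by (rule F_cs[OF psd])
  have mnn: "maxcorr \<tau> \<ge> 0" by (rule maxcorr_nonneg[OF psd])
  show ?thesis
  proof (cases "Re vX = 0 \<or> Re vY = 0")
    case True
    then have "(cmod (mtrace (\<tau> ** tensor X (madj Y))))^2 \<le> 0" using cs by auto
    then have "cmod (mtrace (\<tau> ** tensor X (madj Y))) = 0" by simp
    then show ?thesis using mnn F by simp
  next
    case False
    then have px: "Re vX > 0" and py: "Re vY > 0" using vXr vYr by auto
    define sx where "sx = sqrt (Re vX)"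
    define sy where "sy = sqrt (Re vY)"
    have sxp: "sx > 0" "sx \<le> 1" using px vX1 by (auto simp: sx_def)
    have syp: "sy > 0" "sy \<le> 1" using py vY1 by (auto simp: sy_def)
    have vXs: "vX = of_real (sx * sx)" using vXr px by (simp add: sx_def complex_eq_iff)
    have vYs: "vY = of_real (sy * sy)" using vYr py by (simp add: sy_def complex_eq_iff)
    define X' where "X' = (1/sx) *\<^sub>R X"
    define Y' where "Y' = (1/sy) *\<^sub>R Y"
    have c1: "mtrace (?A ** X') = 0" unfolding X'_def mtrace_scaleR cX by simp
    have c2: "mtrace (?B ** Y') = 0" unfolding Y'_def mtrace_scaleR cY by simp
    have c3: "mtrace (?A ** (X' ** madj X')) = 1"
      unfolding X'_def madj_scaleR mult_scaleR_both mtrace_scaleR vX_def[symmetric] vXs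
      using sxp by (simp flip: of_real_mult)
    have c4: "mtrace (?B ** (Y' ** madj Y')) = 1"
      unfolding Y'_def madj_scaleR mult_scaleR_both mtrace_scaleR vY_def[symmetric] vYs
      using syp by (simp flip: of_real_mult)
    have up: "cmod (mtrace (\<tau> ** tensor X' (madj Y'))) \<le> maxcorr \<tau>"
      by (rule maxcorr_upper[OF psd c1 c2 c3 c4])
    have "mtrace (\<tau> ** tensor X' (madj Y')) = of_real (1/sx * (1/sy)) * mtrace (\<tau> ** tensor X (madj Y))"
      unfolding X'_def Y'_def madj_scaleR tensor_scaleR1 tensor_scaleR2 scaleR_scaleR mtrace_scaleR
      by (simp add: mult.commute)
    then have "cmod (mtrace (\<tau> ** tensor X' (madj Y'))) = cmod (mtrace (\<tau> ** tensor X (madj Y))) / (sx * sy)"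
      using sxp syp by (simp only: norm_mult norm_of_real) simp
    then have "cmod (mtrace (\<tau> ** tensor X (madj Y))) = sx * sy * cmod (mtrace (\<tau> ** tensor X' (madj Y')))"
      using sxp syp by (simp add: field_simps)
    also have "\<dots> \<le> sx * sy * maxcorr \<tau>"
      using mult_left_mono[OF up, of "sx * sy"] sxp syp by simp
    also have "\<dots> \<le> maxcorr \<tau>"
    proof -
      have "sx * sy \<le> 1" using sxp syp by (simp add: mult_le_one)
      then show ?thesis using mnn mult_right_mono[of "sx * sy" 1 "maxcorr \<tau>"] by simp
    qed
    finally show ?thesis unfolding F .
  qed
qed

lemma psd_entry_le: assumes "density A" shows "cmod (A$i$j) \<le> 1"
proof -
  have ps: "psd A" using assms by (simp add: density_def)
  have "(cmod (A$i$j))^2 \<le> Re (A$i$i) * Re (A$j$j)"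
    using bf_cs[OF ps, of "\<lambda>k. if k = i then 1 else 0" "\<lambda>k. if k = j then 1 else 0"]
    by (simp add: bf_delta)
  also have "\<dots> \<le> 1 * 1"
    by (rule mult_mono) (use diag_le1[OF assms] psd_diag(2)[OF ps] in auto)
  finally show ?thesis using power2_le_imp_le[of "cmod (A$i$j)" 1] by simp
qed

lemma norm_vec_le_sum: "norm (x::'c::real_normed_vector^'n::finite) \<le> (\<Sum>i\<in>UNIV. norm (x$i))"
  by (simp add: norm_vec_def L2_set_le_sum)

lemma norm_mat_le: "norm (M::complex^'n::finite^'m::finite) \<le> (\<Sum>r\<in>UNIV. \<Sum>s\<in>UNIV. cmod (M$r$s))"
  by (rule order_trans[OF norm_vec_le_sum sum_mono[OF norm_vec_le_sum]])

lemma compact_density: "compact {A :: complex^'n::finite^'n. density A}"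
proof -
  have cl: "closed {A :: complex^'n^'n. density A}"
  proof -
    have eq: "{A :: complex^'n^'n. density A} =
      (\<Inter>v. {A. Im (\<Sum>i\<in>UNIV. \<Sum>j\<in>UNIV. cnj (v $ i) * A $ i $ j * v $ j) = 0} \<inter>
             {A. 0 \<le> Re (\<Sum>i\<in>UNIV. \<Sum>j\<in>UNIV. cnj (v $ i) * A $ i $ j * v $ j)}) \<inter>
      {A. mtrace A = 1}"
      by (auto simp: density_def psd_def Let_def)
    show ?thesis unfolding eq mtrace_def
      by (intro closed_Int closed_INT ballI closed_Collect_eq closed_Collect_le continuous_intros)
  qed
  have bd: "bounded {A :: complex^'n^'n. density A}"
  proof -
    have "norm A \<le> real (CARD('n) * CARD('n))" if "density A" for A :: "complex^'n^'n"
    proof -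
      have "norm A \<le> (\<Sum>r\<in>UNIV. \<Sum>s\<in>UNIV. cmod (A$r$s))" by (rule norm_mat_le)
      also have "\<dots> \<le> (\<Sum>r\<in>(UNIV::'n set). \<Sum>s\<in>(UNIV::'n set). 1)"
        by (intro sum_mono psd_entry_le[OF that])
      finally show ?thesis by simp
    qed
    then show ?thesis unfolding bounded_iff by blast
  qed
  show ?thesis using cl bd by (simp add: compact_eq_bounded_closed)
qed

definition prodstates :: "(complex^('a::finite\<times>'b::finite)^('a\<times>'b)) set" where
  "prodstates = {tensor A B | A B. density A \<and> density B}"

lemma compact_prodstates: "compact (prodstates :: (complex^('a::finite\<times>'b::finite)^('a\<times>'b)) set)"
proof -
  have "prodstates = (\<lambda>x. tensor (fst x) (snd x)) ` ({A :: complex^'a^'a. density A} \<times> {B :: complex^'b^'b. density B})"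
  proof (rule set_eqI)
    fix x :: "complex^('a\<times>'b)^('a\<times>'b)"
    show "x \<in> prodstates \<longleftrightarrow> x \<in> (\<lambda>x. tensor (fst x) (snd x)) ` ({A :: complex^'a^'a. density A} \<times> {B :: complex^'b^'b. density B})"
    proof
      assume "x \<in> prodstates"
      then obtain A B where "x = tensor A B" "density A" "density B" unfolding prodstates_def by blast
      then show "x \<in> (\<lambda>x. tensor (fst x) (snd x)) ` ({A :: complex^'a^'a. density A} \<times> {B :: complex^'b^'b. density B})"
        by (intro image_eqI[where x="(A,B)"]) auto
    next
      assume "x \<in> (\<lambda>x. tensor (fst x) (snd x)) ` ({A :: complex^'a^'a. density A} \<times> {B :: complex^'b^'b. density B})"
      then obtain A B where "x = tensor A B" "density A" "density B" by auto
      then show "x \<in> prodstates" unfolding prodstates_def by blast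
    qed
  qed
  moreover have "compact ((\<lambda>x. tensor (fst x) (snd x)) ` ({A :: complex^'a^'a. density A} \<times> {B :: complex^'b^'b. density B}))"
    by (intro compact_continuous_image compact_Times compact_density)
       (unfold tensor_def, intro continuous_intros)
  ultimately show ?thesis by simp
qed

lemma mtrace_sum_scaleR: "mtrace (\<Sum>i\<in>I. p i *\<^sub>R M i) = (\<Sum>i\<in>I. complex_of_real (p i) * mtrace (M i))"
  unfolding mtrace_def by (simp add: sum_component cscaleR sum_distrib_left) (rule sum.swap)

lemma sep_conv:
  fixes R :: "complex^('a::finite\<times>'b::finite)^('a\<times>'b)"
  shows "separable R \<longleftrightarrow> R \<in> convex hull prodstates"
proof
  assume "separable R"
  then obtain n :: nat and p :: "nat \<Rightarrow> real" and tA :: "nat \<Rightarrow> complex^'a^'a" and tB :: "nat \<Rightarrow> complex^'b^'b"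
    where h: "\<forall>i<n. p i \<ge> 0 \<and> density (tA i) \<and> density (tB i)" "(\<Sum>i<n. p i) = 1"
      "R = (\<Sum>i<n. p i *\<^sub>R tensor (tA i) (tB i))"
    using \<open>separable R\<close> unfolding separable_def by (elim exE conjE) (rule that, assumption+)
  show "R \<in> convex hull prodstates"
    unfolding h(3)
  proof (rule convex_sum)
    show "finite {..<n}" by simp
    show "convex (convex hull prodstates)" by (rule convex_convex_hull)
    show "sum p {..<n} = 1" using h(2) .
    show "\<And>i. i \<in> {..<n} \<Longrightarrow> 0 \<le> p i" using h(1) by auto
    show "\<And>i. i \<in> {..<n} \<Longrightarrow> tensor (tA i) (tB i) \<in> convex hull prodstates"
      using h(1) by (intro hull_inc) (auto simp: prodstates_def)
  qed
next
  assume "R \<in> convex hull prodstates"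
  then obtain k u x where kux: "\<forall>i\<in>{1::nat..k}. 0 \<le> u i \<and> x i \<in> prodstates"
    "sum u {1..k} = 1" "(\<Sum>i = 1..k. u i *\<^sub>R x i) = R"
    unfolding convex_hull_indexed by blast
  have "\<forall>i. \<exists>A B. i \<in> {1..k} \<longrightarrow> density A \<and> density B \<and> x i = tensor A B"
    using kux(1) unfolding prodstates_def by blast
  then obtain fA fB where f: "\<And>i. i \<in> {1..k} \<Longrightarrow> density (fA i) \<and> density (fB i) \<and> x i = tensor (fA i) (fB i)"
    by metis
  have "\<forall>i<k. u (Suc i) \<ge> 0 \<and> density (fA (Suc i)) \<and> density (fB (Suc i))"
    using kux(1) f by auto
  moreover have "(\<Sum>i<k. u (Suc i)) = 1"
    using kux(2) by (simp add: sum.atLeast1_atMost_eq)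
  moreover have "R = (\<Sum>i<k. u (Suc i) *\<^sub>R tensor (fA (Suc i)) (fB (Suc i)))"
  proof -
    have "R = (\<Sum>i = Suc 0..k. u i *\<^sub>R x i)" using kux(3) by simp
    also have "\<dots> = (\<Sum>i<k. u (Suc i) *\<^sub>R x (Suc i))" by (rule sum.atLeast1_atMost_eq)
    also have "\<dots> = (\<Sum>i<k. u (Suc i) *\<^sub>R tensor (fA (Suc i)) (fB (Suc i)))"
      by (rule sum.cong[OF refl]) (use f in auto)
    finally show ?thesis .
  qed
  ultimately show "separable R" unfolding separable_def
    by (intro exI[where x=k] exI[where x="\<lambda>i. u (Suc i)"] exI[where x="\<lambda>i. fA (Suc i)"]
        exI[where x="\<lambda>i. fB (Suc i)"] conjI)
qed

lemma decomp_pos: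
  fixes n :: nat and \<rho> :: "complex^('a::finite\<times>'b::finite)^('a\<times>'b)"
  assumes "density \<rho>" "\<forall>i<n. p i \<ge> (0::real) \<and> density (\<tau> i)" "\<rho> = (\<Sum>i<n. p i *\<^sub>R \<tau> i)"
  shows "n > 0" "Max ((\<lambda>i. maxcorr (\<tau> i)) ` {..<n}) \<ge> 0"
    "\<And>i. i < n \<Longrightarrow> maxcorr (\<tau> i) \<le> Max ((\<lambda>i. maxcorr (\<tau> i)) ` {..<n})"
proof -
  show n: "n > 0"
  proof (rule ccontr)
    assume "\<not> n > 0"
    then have "n = 0" by simp
    then have "\<rho> = 0" using assms(3) by simp
    then show False using assms(1) by (simp add: density_def mtrace_def)
  qed
  show le: "\<And>i. i < n \<Longrightarrow> maxcorr (\<tau> i) \<le> Max ((\<lambda>i. maxcorr (\<tau> i)) ` {..<n})"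
    by (rule Max_ge) auto
  have "maxcorr (\<tau> 0) \<ge> 0" using assms(2) n maxcorr_nonneg by (auto simp: density_def)
  then show "Max ((\<lambda>i. maxcorr (\<tau> i)) ` {..<n}) \<ge> 0" using le[OF n] by linarith
qed

theorem theorem6:
  fixes \<rho> :: "complex^('a::finite \<times> 'b::finite)^('a \<times> 'b)"
  assumes "density \<rho>"
  shows "maxent \<rho> = 0 \<longleftrightarrow> separable \<rho>"
proof -
  define S where "S = {Max ((\<lambda>i. maxcorr (\<tau> i)) ` {..<n}) | (n::nat) p \<tau>.
      (\<forall>i<n. p i \<ge> (0::real) \<and> density (\<tau> i)) \<and> \<rho> = (\<Sum>i<n. p i *\<^sub>R \<tau> i)}"
  have me: "maxent \<rho> = Inf S" unfolding maxent_def S_def ..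
  have nonneg: "\<And>x. x \<in> S \<Longrightarrow> 0 \<le> x"
    unfolding S_def using decomp_pos(2)[OF assms] by blast
  have ne: "S \<noteq> {}"
  proof -
    have "Max ((\<lambda>i. maxcorr ((\<lambda>_. \<rho>) i)) ` {..<1::nat}) \<in> S"
      unfolding S_def using assms by (intro CollectI exI[where x="1::nat"] exI[where x="\<lambda>_. 1::real"]) auto
    then show ?thesis by blast
  qed
  have bb: "bdd_below S" using nonneg by (intro bdd_belowI[where m=0]) auto
  show ?thesis
  proof
    assume "separable \<rho>"
    then obtain n :: nat and p :: "nat \<Rightarrow> real" and tA :: "nat \<Rightarrow> complex^'a^'a" and tB :: "nat \<Rightarrow> complex^'b^'b"
      where h: "\<forall>i<n. p i \<ge> 0 \<and> density (tA i) \<and> density (tB i)" "(\<Sum>i<n. p i) = 1"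
        "\<rho> = (\<Sum>i<n. p i *\<^sub>R tensor (tA i) (tB i))"
      using \<open>separable \<rho>\<close> unfolding separable_def by (elim exE conjE) (rule that, assumption+)
    define \<tau> where "\<tau> i = tensor (tA i) (tB i)" for i
    have dt: "\<forall>i<n. p i \<ge> 0 \<and> density (\<tau> i)" using h(1) by (auto simp: \<tau>_def density_tensor)
    have rt: "\<rho> = (\<Sum>i<n. p i *\<^sub>R \<tau> i)" using h(3) by (simp add: \<tau>_def)
    have npos: "n > 0" by (rule decomp_pos(1)[OF assms dt rt])
    have "(\<lambda>i. maxcorr (\<tau> i)) ` {..<n} = {0}"
      using npos h(1) by (auto simp: \<tau>_def maxcorr_product image_iff)
    then have "Max ((\<lambda>i. maxcorr (\<tau> i)) ` {..<n}) = 0" by simp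
    moreover have "Max ((\<lambda>i. maxcorr (\<tau> i)) ` {..<n}) \<in> S" unfolding S_def using dt rt by blast
    ultimately have "0 \<in> S" by simp
    then show "maxent \<rho> = 0" unfolding me by (rule cInf_eq_minimum) (rule nonneg)
  next
    assume m0: "maxent \<rho> = 0"
    have "\<rho> \<in> convex hull prodstates"
    proof (rule closed_approachable[THEN iffD1])
      show "closed (convex hull (prodstates :: (complex^('a\<times>'b)^('a\<times>'b)) set))"
        by (intro compact_imp_closed compact_convex_hull compact_prodstates)
      show "\<forall>e>0. \<exists>y\<in>convex hull prodstates. dist y \<rho> < e"
      proof (intro allI impI)
        fix e :: real assume e: "e > 0"
        define N where "N = real (CARD('a\<times>'b) * CARD('a\<times>'b))"
        have Nnn: "N \<ge> 0" by (simp add: N_def)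
        define \<delta> where "\<delta> = e / (N + 1)"
        have dpos: "\<delta> > 0" using e Nnn by (simp add: \<delta>_def)
        have "Inf S < \<delta>" using m0 dpos unfolding me by simp
        then obtain x where "x \<in> S" "x < \<delta>" using cInf_less_iff[OF ne bb] by blast
        then obtain n :: nat and p \<tau> where dec: "\<forall>i<n. p i \<ge> (0::real) \<and> density (\<tau> i)"
          "\<rho> = (\<Sum>i<n. p i *\<^sub>R \<tau> i)" and xd: "Max ((\<lambda>i. maxcorr (\<tau> i)) ` {..<n}) < \<delta>"
          unfolding S_def by blast
        have mc: "maxcorr (\<tau> i) \<le> \<delta>" if "i < n" for i
          using decomp_pos(3)[OF assms dec that] xd by linarith
        have ps1: "(\<Sum>i<n. p i) = 1"
        proof -
          have "(\<Sum>i<n. complex_of_real (p i)) = mtrace \<rho>"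
            unfolding dec(2) mtrace_sum_scaleR using dec(1) by (simp add: density_def)
          also have "\<dots> = 1" using assms by (simp add: density_def)
          finally have "complex_of_real (\<Sum>i<n. p i) = 1" by (simp only: of_real_sum)
          then show ?thesis by (simp only: of_real_eq_1_iff)
        qed
        define \<sigma> where "\<sigma> = (\<Sum>i<n. p i *\<^sub>R tensor (ptraceB (\<tau> i)) (ptraceA (\<tau> i)))"
        have "\<sigma> \<in> convex hull prodstates"
          unfolding \<sigma>_def
        proof (rule convex_sum)
          show "finite {..<n}" by simp
          show "convex (convex hull prodstates)" by (rule convex_convex_hull)
          show "sum p {..<n} = 1" using ps1 .
          show "\<And>i. i \<in> {..<n} \<Longrightarrow> 0 \<le> p i" using dec(1) by auto
          show "\<And>i. i \<in> {..<n} \<Longrightarrow> tensor (ptraceB (\<tau> i)) (ptraceA (\<tau> i)) \<in> convex hull prodstates"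
          proof -
            fix i assume "i \<in> {..<n}"
            then have "density (ptraceB (\<tau> i))" "density (ptraceA (\<tau> i))"
              using dec(1) density_ptraceA density_ptraceB by auto
            then show "tensor (ptraceB (\<tau> i)) (ptraceA (\<tau> i)) \<in> convex hull prodstates"
              by (intro hull_inc) (unfold prodstates_def, blast)
          qed
        qed
        moreover have "dist \<sigma> \<rho> < e"
        proof -
          have bnd: "norm (\<tau> i - tensor (ptraceB (\<tau> i)) (ptraceA (\<tau> i))) \<le> N * \<delta>" if i: "i < n" for i
          proof -
            have "norm (\<tau> i - tensor (ptraceB (\<tau> i)) (ptraceA (\<tau> i))) \<le>
                (\<Sum>r\<in>UNIV. \<Sum>s\<in>UNIV. cmod ((\<tau> i - tensor (ptraceB (\<tau> i)) (ptraceA (\<tau> i)))$r$s))"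
              by (rule norm_mat_le)
            also have "\<dots> \<le> (\<Sum>r\<in>(UNIV::('a\<times>'b) set). \<Sum>s\<in>(UNIV::('a\<times>'b) set). \<delta>)"
            proof (intro sum_mono)
              fix r s :: "'a\<times>'b"
              have "cmod ((\<tau> i - tensor (ptraceB (\<tau> i)) (ptraceA (\<tau> i)))$r$s) \<le> maxcorr (\<tau> i)"
                using entry_bound[of "\<tau> i" "fst r" "snd r" "fst s" "snd s"] dec(1) i
                by (simp add: tensor_def)
              then show "cmod ((\<tau> i - tensor (ptraceB (\<tau> i)) (ptraceA (\<tau> i)))$r$s) \<le> \<delta>"
                using mc[OF i] by linarith
            qed
            also have "\<dots> = N * \<delta>" by (simp add: N_def)
            finally show ?thesis .
          qed
          have rs: "\<rho> - \<sigma> = (\<Sum>i<n. p i *\<^sub>R (\<tau> i - tensor (ptraceB (\<tau> i)) (ptraceA (\<tau> i))))"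
            unfolding \<sigma>_def by (subst dec(2)) (simp add: scaleR_diff_right sum_subtractf)
          have "dist \<sigma> \<rho> = norm (\<Sum>i<n. p i *\<^sub>R (\<tau> i - tensor (ptraceB (\<tau> i)) (ptraceA (\<tau> i))))"
            unfolding rs[symmetric] by (simp add: dist_norm norm_minus_commute)
          also have "\<dots> \<le> (\<Sum>i<n. norm (p i *\<^sub>R (\<tau> i - tensor (ptraceB (\<tau> i)) (ptraceA (\<tau> i)))))"
            by (rule norm_sum)
          also have "\<dots> \<le> (\<Sum>i<n. p i * (N * \<delta>))"
            by (rule sum_mono) (use dec(1) bnd in \<open>auto intro: mult_left_mono\<close>)
          also have "\<dots> = N * \<delta>" using ps1 by (simp flip: sum_distrib_right)
          also have "\<dots> < e" using e Nnn by (simp add: \<delta>_def field_simps)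
          finally show ?thesis .
        qed
        ultimately show "\<exists>y\<in>convex hull prodstates. dist y \<rho> < e" by blast
      qed
    qed
    then show "separable \<rho>" using sep_conv by blast
  qed
qed

end
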